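(* Let $\mathbb{N}_0[[x]]$ be the semidomain of formal power series with coefficients in $\mathbb{N}_0$ (a subsemiring of $\mathbb{Z}[[x]]$). Then $\mathbb{N}_0[[x]]$ is not atomic. (In particular, atomicity does not ascend from the UFS $\mathbb{N}_0$ to its semidomain of formal power series.)
   Context: For a semidomain $S$ (a subset of an integral domain containing $0,1$ and closed under $+$ and $\cdot$), $S^*=S\setminus\{0\}$ is a multiplicative monoid; an atom is a nonunit $a\in S^*$ such that $a=bc$ with $b,c\in S^*$ forces $b$ or $c$ to be a unit; $S$ is atomic if every nonunit of $S^*$ is a finite product of atoms. $S$ is a UFS if every nonunit of $S^*$ factors into atoms uniquely up to order and unit factors. *)

theory Defs
  imports "HOL-Computational_Algebra.Formal_Power_Series"
begin

definition semidomain :: "'a::idom set \<Rightarrow> bool" where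
  "semidomain S \<longleftrightarrow> 0 \<in> S \<and> 1 \<in> S \<and>
     (\<forall>a\<in>S. \<forall>b\<in>S. a + b \<in> S) \<and> (\<forall>a\<in>S. \<forall>b\<in>S. a * b \<in> S)"

definition sd_unit :: "'a::idom set \<Rightarrow> 'a \<Rightarrow> bool" where
  "sd_unit S u \<longleftrightarrow> u \<in> S - {0} \<and> (\<exists>v\<in>S - {0}. u * v = 1)"

definition sd_atom :: "'a::idom set \<Rightarrow> 'a \<Rightarrow> bool" where
  "sd_atom S a \<longleftrightarrow> a \<in> S - {0} \<and> \<not> sd_unit S a \<and>
     (\<forall>b\<in>S - {0}. \<forall>c\<in>S - {0}. a = b * c \<longrightarrow> sd_unit S b \<or> sd_unit S c)"

definition sd_atomic :: "'a::idom set \<Rightarrow> bool" where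
  "sd_atomic S \<longleftrightarrow> (\<forall>x\<in>S - {0}. \<not> sd_unit S x \<longrightarrow>
     (\<exists>as. as \<noteq> [] \<and> (\<forall>a\<in>set as. sd_atom S a) \<and> x = prod_list as))"

definition N0_fps :: "int fps set" where
  "N0_fps = {f. \<forall>n. 0 \<le> fps_nth f n}"

end

theory Submission
  imports Defs
begin


definition tiling :: "nat set \<Rightarrow> nat set \<Rightarrow> bool" where
 "tiling A C \<longleftrightarrow> 0 \<in> A \<and> 0 \<in> C \<and> (\<forall>n. \<exists>a\<in>A. \<exists>c\<in>C. n = a + c) \<and>
   (\<forall>a c a' c'. a\<in>A \<longrightarrow> c\<in>C \<longrightarrow> a'\<in>A \<longrightarrow> c'\<in>C \<longrightarrow> a + c = a' + c' \<longrightarrow> a = a')"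

lemma tiling_sym: "tiling A C \<Longrightarrow> tiling C A"
  unfolding tiling_def by (metis add.commute add_left_cancel)

lemma tilingE: assumes "tiling A C" obtains a c where "a \<in> A" "c \<in> C" "n = a + c"
  using assms unfolding tiling_def by blast

lemma tilingU: assumes "tiling A C" "a\<in>A" "c\<in>C" "a'\<in>A" "c'\<in>C" "a + c = a' + c'"
  shows "a = a'" "c = c'"
  using assms unfolding tiling_def by (metis add_left_cancel)+

lemma block_below:
  fixes m q j N :: nat
  assumes H: "\<forall>n<N. \<not> m dvd n \<longrightarrow> (n\<in>A \<longleftrightarrow> n-1\<in>A)"
  shows "j < m \<Longrightarrow> m*q + j < N \<Longrightarrow> m*q + j \<in> A \<longleftrightarrow> m*q \<in> A"
proof (induction j)
  case 0 then show ?case by simp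
next
  case (Suc j)
  have "\<not> m dvd (m*q + Suc j)"
    using Suc.prems by (metis dvd_add_right_iff dvd_triv_left nat_dvd_not_less zero_less_Suc)
  then have "m*q + Suc j \<in> A \<longleftrightarrow> m*q + j \<in> A" using H Suc.prems by auto
  then show ?case using Suc by auto
qed

lemma lemmaT:
  assumes T: "tiling A C" and m: "0 < m" "m \<in> C" and mmin: "\<forall>c\<in>C. 0 < c \<longrightarrow> m \<le> c"
  shows "(\<forall>c\<in>C. m dvd c) \<and> (\<forall>n. \<not> m dvd n \<longrightarrow> (n\<in>A \<longleftrightarrow> n-1\<in>A))"
proof -
  have small: "n \<in> A" if "n < m" for n
  proof -
    obtain a c where ac: "a\<in>A" "c\<in>C" "n = a + c" using tilingE[OF T] by blast
    then have "c = 0" using mmin that by fastforce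
    then show ?thesis using ac by simp
  qed
  have A0: "0 \<in> A" and C0: "0 \<in> C" using T unfolding tiling_def by auto
  have H: "(\<forall>c<N. c \<in> C \<longrightarrow> m dvd c) \<and> (\<forall>n<N. \<not> m dvd n \<longrightarrow> (n\<in>A \<longleftrightarrow> n-1\<in>A))" for N
  proof (induction N)
    case 0 then show ?case by simp
  next
    case (Suc N)
    have IH1: "\<And>c. c < N \<Longrightarrow> c \<in> C \<Longrightarrow> m dvd c" using Suc by blast
    have IH2: "\<forall>n<N. \<not> m dvd n \<longrightarrow> (n\<in>A \<longleftrightarrow> n-1\<in>A)" using Suc by blast
    have i: "m dvd N" if NC: "N \<in> C"
    proof (rule ccontr)
      assume nd: "\<not> m dvd N"
      then have "N \<noteq> 0" by (metis dvd_0_right)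
      then have Nm: "m \<le> N" using mmin NC by (simp add: gr0I)
      define q where "q = N div m"
      define r where "r = N mod m"
      have Nqr: "N = m*q + r" unfolding q_def r_def by simp
      have r0: "0 < r" "r < m" using nd m unfolding r_def by (auto simp: dvd_eq_mod_eq_0)
      have q1: "1 \<le> q" using Nm m unfolding q_def by (metis One_nat_def Suc_leI div_greater_zero_iff)
      obtain b c where bc: "b\<in>A" "c\<in>C" "m*q = b + c" using tilingE[OF T] by blast
      have "m dvd c" using IH1[of c] bc Nqr r0 by auto
      then have "m dvd b" using bc by (metis dvd_add_left_iff dvd_triv_left)
      then obtain q'' where b: "b = m*q''" by auto
      show False
      proof (cases "c = 0")
        case False
        have "b + r < N" using False bc Nqr by linarith
        then have "b + r \<in> A" using block_below[OF IH2 r0(2), of q''] bc b by simp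
        moreover have "N = (b + r) + c" using bc Nqr by simp
        ultimately have "b + r = 0" using tilingU(1)[OF T _ bc(2) A0 NC] by simp
        then show False using r0 by simp
      next
        case True
        then have qA: "m*q \<in> A" using bc by simp
        have "m*q + m = (m - r) + N" using Nqr r0 by simp
        then have "m*q = m - r" using tilingU(1)[OF T qA m(2) small NC] r0 by simp
        then show False using q1 r0 m
          by (metis diff_less le_Suc_ex less_not_refl3 mult.right_neutral nat_mult_less_cancel1 not_less)
      qed
    qed
    have ii: "N\<in>A \<longleftrightarrow> N-1\<in>A" if nd: "\<not> m dvd N"
    proof
      assume NA: "N \<in> A"
      show "N - 1 \<in> A"
      proof (rule ccontr)
        assume nA: "N - 1 \<notin> A"
        obtain b c where bc: "b\<in>A" "c\<in>C" "N - 1 = b + c" using tilingE[OF T] by blast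
        have N0: "N \<noteq> 0" using nd by (metis dvd_0_right)
        have c0: "c \<noteq> 0" using nA bc by (metis add_0_right)
        have mc: "m dvd c" using IH1[of c] bc N0 by auto
        have "\<not> m dvd (b+1)" using nd mc bc N0
          by (metis Suc_pred' add.commute add_Suc_right bot_nat_0.not_eq_extremum dvd_add_left_iff plus_1_eq_Suc)
        moreover have "b + 1 < N" using bc c0 N0 by linarith
        ultimately have "b + 1 \<in> A" using IH2 bc by auto
        moreover have "N + 0 = (b+1) + c" using bc N0 by simp
        ultimately have "N = b + 1" using tilingU(1)[OF T NA C0 _ bc(2)] by simp
        then show False using bc c0 N0 by simp
      qed
    next
      assume nA: "N - 1 \<in> A"
      show "N \<in> A"
      proof (rule ccontr)
        assume NA: "N \<notin> A"
        obtain b c where bc: "b\<in>A" "c\<in>C" "N = b + c" using tilingE[OF T] by blast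
        have c0: "c \<noteq> 0" using NA bc by (metis add_0_right)
        have "c \<noteq> N" using i bc nd by metis
        then have cN: "c < N" using bc by simp
        have mc: "m dvd c" using IH1 cN bc by auto
        have nb: "\<not> m dvd b" using nd mc bc by (metis dvd_add)
        have "b < N" using bc c0 by simp
        then have "b - 1 \<in> A" using IH2 nb bc by auto
        moreover have "b \<noteq> 0" using nb by (metis dvd_0_right)
        then have "(N - 1) + 0 = (b - 1) + c" using bc by simp
        ultimately have "N - 1 = b - 1" using tilingU(1)[OF T nA C0 _ bc(2)] by simp
        then show False using bc c0 \<open>b \<noteq> 0\<close> by simp
      qed
    qed
    show ?case
    proof (intro conjI allI impI)
      fix c assume "c < Suc N" "c \<in> C"
      then show "m dvd c" using IH1 i by (cases "c = N") auto
    next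
      fix n assume "n < Suc N" "\<not> m dvd n"
      then show "n\<in>A \<longleftrightarrow> n-1\<in>A" using IH2 ii by (cases "n = N") auto
    qed
  qed
  show ?thesis
  proof (intro conjI ballI allI impI)
    fix c assume "c \<in> C" then show "m dvd c" using H[of "Suc c"] by auto
  next
    fix n assume "\<not> m dvd n" then show "n\<in>A \<longleftrightarrow> n-1\<in>A" using H[of "Suc n"] by auto
  qed
qed

lemma block_all:
  fixes m :: nat
  assumes "0 < m" "\<forall>n. \<not> m dvd n \<longrightarrow> (n\<in>A \<longleftrightarrow> n-1\<in>A)"
  shows "n \<in> A \<longleftrightarrow> m*(n div m) \<in> A"
proof -
  have "m*(n div m) + n mod m \<in> A \<longleftrightarrow> m*(n div m) \<in> A"
    using block_below[of "Suc n" m A "n mod m" "n div m"] assms by simp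
  then show ?thesis by simp
qed

lemma tiling_scale:
  assumes T: "tiling A C" and d: "0 < d" and dA: "\<forall>a\<in>A. d dvd a"
  shows "tiling {k. d*k \<in> A} {k. d*k \<in> C}"
  unfolding tiling_def
proof (intro conjI allI impI)
  show "0 \<in> {k. d*k \<in> A}" "0 \<in> {k. d*k \<in> C}" using T unfolding tiling_def by auto
next
  fix n
  obtain a c where ac: "a\<in>A" "c\<in>C" "d*n = a + c" using tilingE[OF T] by blast
  obtain a' where a': "a = d*a'" using dA ac by blast
  have "d dvd c" using ac a' by (metis dvd_add_right_iff dvd_triv_left)
  then obtain c' where c': "c = d*c'" by blast
  have "n = a' + c'" using ac a' c' d by (simp add: distrib_left[symmetric])
  then show "\<exists>a\<in>{k. d*k \<in> A}. \<exists>c\<in>{k. d*k \<in> C}. n = a + c" using ac a' c' by auto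
next
  fix a c a' c' assume "a \<in> {k. d*k \<in> A}" "c \<in> {k. d*k \<in> C}" "a' \<in> {k. d*k \<in> A}" "c' \<in> {k. d*k \<in> C}" "a + c = a' + c'"
  then have "d*a = d*a'" using tilingU(1)[OF T, of "d*a" "d*c" "d*a'" "d*c'"] by (simp add: distrib_left[symmetric])
  then show "a = a'" using d by simp
qed

definition blockP :: "nat \<Rightarrow> nat \<Rightarrow> nat set \<Rightarrow> bool" where
  "blockP d k A \<longleftrightarrow> 1 \<le> d \<and> 2 \<le> k \<and> (\<forall>n. n \<in> A \<longleftrightarrow> d dvd n \<and> d*k*(n div (d*k)) \<in> A)"

lemma tiling_univ:
  assumes T: "tiling A C" and C0: "\<forall>c\<in>C. c = 0"
  shows "A = UNIV"
proof -
  { fix n obtain a c where "a\<in>A" "c\<in>C" "n = a + c" using tilingE[OF T] by blast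
    then have "n \<in> A" using C0 by auto }
  then show ?thesis by auto
qed

lemma least_pos:
  fixes C :: "nat set"
  assumes "\<exists>c\<in>C. c \<noteq> 0"
  obtains m where "0 < m" "m \<in> C" "\<forall>c\<in>C. 0 < c \<longrightarrow> m \<le> c"
proof -
  define m where "m = (LEAST c. c \<in> C \<and> 0 < c)"
  have "m \<in> C \<and> 0 < m" unfolding m_def by (rule LeastI_ex) (use assms in auto)
  moreover have "\<forall>c\<in>C. 0 < c \<longrightarrow> m \<le> c" unfolding m_def by (auto intro: Least_le)
  ultimately show ?thesis using that by blast
qed

lemma tiling_block:
  assumes T: "tiling A C" and inf: "infinite A"
  shows "\<exists>d k. blockP d k A"
proof (cases "\<forall>c\<in>C. c = 0")
  case True
  then have "A = UNIV" using tiling_univ[OF T] by blast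
  then have "blockP 1 2 A" unfolding blockP_def by simp
  then show ?thesis by blast
next
  case False
  then obtain m where m: "0 < m" "m \<in> C" "\<forall>c\<in>C. 0 < c \<longrightarrow> m \<le> c" using least_pos by blast
  note LT = lemmaT[OF T m]
  show ?thesis
  proof (cases "m = 1")
    case False
    then have "blockP 1 m A" unfolding blockP_def using m block_all[of m A] LT by auto
    then show ?thesis by blast
  next
    case True
    have "\<exists>a\<in>A. a \<noteq> 0" using inf by (metis finite.simps insertI1 subsetI subset_singletonD finite_subset)
    then obtain d where d: "0 < d" "d \<in> A" "\<forall>a\<in>A. 0 < a \<longrightarrow> d \<le> a" using least_pos by blast
    note LT2 = lemmaT[OF tiling_sym[OF T] d]
    define A' where "A' = {k. d*k \<in> A}"
    define C' where "C' = {k. d*k \<in> C}"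
    have T': "tiling A' C'" unfolding A'_def C'_def using tiling_scale[OF T d(1)] LT2 by blast
    have Aeq: "n \<in> A \<longleftrightarrow> d dvd n \<and> n div d \<in> A'" for n
      unfolding A'_def using LT2 by auto
    have 1: "1 \<in> A'" unfolding A'_def using d by simp
    show ?thesis
    proof (cases "\<forall>c\<in>C'. c = 0")
      case True
      then have "A' = UNIV" using tiling_univ[OF T'] by blast
      then have "blockP d 2 A" unfolding blockP_def using Aeq d by auto
      then show ?thesis by blast
    next
      case False
      then obtain m' where m': "0 < m'" "m' \<in> C'" "\<forall>c\<in>C'. 0 < c \<longrightarrow> m' \<le> c" using least_pos by blast
      have "m' \<noteq> 1"
      proof
        assume "m' = 1"
        then have "1 \<in> C'" "0 \<in> A'" "0 \<in> C'" using m' T' unfolding tiling_def by auto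
        then show False using tilingU(1)[OF T' 1 \<open>0 \<in> C'\<close> \<open>0 \<in> A'\<close> \<open>1 \<in> C'\<close>] by simp
      qed
      have LT3: "n' \<in> A' \<longleftrightarrow> m'*(n' div m') \<in> A'" for n'
        using block_all[of m' A'] lemmaT[OF T' m'] m' by blast
      have "blockP d m' A" unfolding blockP_def
      proof (intro conjI allI)
        show "1 \<le> d" "2 \<le> m'" using d m' \<open>m' \<noteq> 1\<close> by auto
      next
        fix n
        have e: "d * m' * (n div (d * m')) = d * (m' * (n div d div m'))"
          by (simp add: div_mult2_eq)
        show "n \<in> A \<longleftrightarrow> d dvd n \<and> d * m' * (n div (d * m')) \<in> A"
          unfolding e using Aeq LT3 d(1) by (metis dvd_triv_left nonzero_mult_div_cancel_left not_gr0)
      qed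
      then show ?thesis by blast
    qed
  qed
qed



definition chi :: "nat set \<Rightarrow> int fps" where
  "chi A = Abs_fps (\<lambda>n. if n \<in> A then 1 else 0)"

lemma semidomain_N0: "semidomain N0_fps"
  unfolding semidomain_def N0_fps_def
  by (auto simp: fps_mult_nth intro!: sum_nonneg)

lemma N0_mult: "a \<in> N0_fps \<Longrightarrow> b \<in> N0_fps \<Longrightarrow> a * b \<in> N0_fps"
  using semidomain_N0 unfolding semidomain_def by blast

lemma N0_nonneg: "a \<in> N0_fps \<Longrightarrow> 0 \<le> fps_nth a n"
  unfolding N0_fps_def by auto

lemma chi_N0: "chi A \<in> N0_fps" unfolding N0_fps_def chi_def by auto

lemma term_le:
  assumes "a \<in> N0_fps" "b \<in> N0_fps" "i \<le> n"
  shows "fps_nth a i * fps_nth b (n - i) \<le> fps_nth (a*b) n"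
proof -
  have "fps_nth a i * fps_nth b (n - i) \<le> (\<Sum>j=0..n. fps_nth a j * fps_nth b (n - j))"
    by (rule member_le_sum[where f = "\<lambda>j. fps_nth a j * fps_nth b (n - j)"])
       (use assms in \<open>auto intro: mult_nonneg_nonneg N0_nonneg\<close>)
  then show ?thesis by (simp add: fps_mult_nth)
qed

lemma const_one:
  assumes "a \<in> N0_fps" "b \<in> N0_fps" "fps_nth (a*b) 0 = 1"
  shows "fps_nth a 0 = 1" "fps_nth b 0 = 1"
proof -
  have "fps_nth a 0 * fps_nth b 0 = 1" using assms by simp
  moreover have "0 \<le> fps_nth a 0" "0 \<le> fps_nth b 0" using assms N0_nonneg by auto
  ultimately show "fps_nth a 0 = 1" "fps_nth b 0 = 1" using pos_zmult_eq_1_iff by (auto simp: zmult_eq_1_iff)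
qed

lemma unit_one:
  assumes "sd_unit N0_fps u" shows "u = 1"
proof -
  obtain v where v: "v \<in> N0_fps" "u * v = 1" and u: "u \<in> N0_fps" using assms unfolding sd_unit_def by auto
  have u0: "fps_nth u 0 = 1" "fps_nth v 0 = 1" using const_one[OF u v(1)] v by auto
  show ?thesis
  proof (rule fps_ext)
    fix n show "fps_nth u n = fps_nth 1 n"
    proof (cases "n = 0")
      case True then show ?thesis using u0 by simp
    next
      case False
      have "fps_nth u n * fps_nth v (n - n) \<le> fps_nth (u*v) n" using term_le[OF u v(1), of n n] by simp
      then have "fps_nth u n \<le> 0" using False u0 v by simp
      then show ?thesis using N0_nonneg[OF u, of n] False by simp
    qed
  qed
qed

lemma block_factor:
  assumes B: "blockP d k A"
  shows "chi A = chi {i. i < d*k \<and> d dvd i} * chi {n\<in>A. d*k dvd n}"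
proof (rule fps_ext)
  fix n
  define D where "D = d*k"
  have D0: "0 < D" using B unfolding blockP_def D_def by simp
  have Bn: "\<And>n. n \<in> A \<longleftrightarrow> d dvd n \<and> D*(n div D) \<in> A" using B unfolding blockP_def D_def by blast
  have dD: "d dvd D" unfolding D_def by simp
  have eq: "(if i \<in> {i. i < D \<and> d dvd i} then 1 else 0) * (if n - i \<in> {n\<in>A. D dvd n} then 1 else 0)
        = (if i = n mod D \<and> n \<in> A then (1::int) else 0)" if "i \<in> {0..n}" for i
  proof -
    have "(i < D \<and> d dvd i \<and> n - i \<in> A \<and> D dvd (n - i)) \<longleftrightarrow> (i = n mod D \<and> n \<in> A)"
    proof
      assume h: "i < D \<and> d dvd i \<and> n - i \<in> A \<and> D dvd (n - i)"
      obtain t where t: "n - i = D*t" using h by blast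
      have nt: "n = D*t + i" using t that by simp
      have im: "i = n mod D" using nt h by simp
      have "n div D = t" using nt h by simp
      then have "D*(n div D) \<in> A" using h t by simp
      moreover have "d dvd n" using h dD nt
        by (metis dvd_add dvd_trans dvd_triv_left)
      ultimately show "i = n mod D \<and> n \<in> A" using Bn im by blast
    next
      assume h: "i = n mod D \<and> n \<in> A"
      have "d dvd n" using h Bn by blast
      then have "d dvd i" using h dD by (simp add: dvd_mod)
      moreover have "n - i = D*(n div D)" using h by (simp add: minus_mod_eq_mult_div)
      moreover have "D*(n div D) \<in> A" using h Bn by blast
      ultimately show "i < D \<and> d dvd i \<and> n - i \<in> A \<and> D dvd (n - i)" using h D0 by simp
    qed
    then show ?thesis by (simp only: mem_Collect_eq if_distrib mult_1 mult_zero_left if_if_eq_conj) (smt (verit))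
  qed
  have "fps_nth (chi {i. i < D \<and> d dvd i} * chi {n\<in>A. D dvd n}) n
      = (\<Sum>i=0..n. (if i \<in> {i. i < D \<and> d dvd i} then 1 else 0) * (if n - i \<in> {n\<in>A. D dvd n} then 1 else 0))"
    by (simp add: fps_mult_nth chi_def)
  also have "\<dots> = (\<Sum>i=0..n. (if i = n mod D \<and> n \<in> A then (1::int) else 0))"
    by (rule sum.cong) (use eq in auto)
  also have "\<dots> = (if n \<in> A then 1 else 0)"
    by (cases "n \<in> A") (auto simp: sum.delta')
  finally show "fps_nth (chi A) n = fps_nth (chi {i. i < d*k \<and> d dvd i} * chi {n\<in>A. d*k dvd n}) n"
    by (simp add: chi_def D_def)
qed

definition ones :: "int fps" where "ones = Abs_fps (\<lambda>_. 1)"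

lemma div_tiling:
  assumes a: "a \<in> N0_fps" and c: "c \<in> N0_fps" and ac: "a * c = ones"
  shows "a = chi {n. fps_nth a n \<noteq> 0}" "tiling {n. fps_nth a n \<noteq> 0} {n. fps_nth c n \<noteq> 0}"
proof -
  have o: "fps_nth (a*c) n = 1" for n using ac by (simp add: ones_def)
  have a0: "fps_nth a 0 = 1" and c0: "fps_nth c 0 = 1" using const_one[OF a c o[of 0]] by auto
  have a01: "fps_nth a n = 0 \<or> fps_nth a n = 1" for n
  proof -
    have "fps_nth a n * fps_nth c (n - n) \<le> 1" using term_le[OF a c, of n n] o by simp
    then show ?thesis using c0 N0_nonneg[OF a, of n] by auto
  qed
  have c01: "fps_nth c n = 0 \<or> fps_nth c n = 1" for n
  proof -
    have "fps_nth a 0 * fps_nth c (n - 0) \<le> 1" using term_le[OF a c, of 0 n] o by simp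
    then show ?thesis using a0 N0_nonneg[OF c, of n] by auto
  qed
  show "a = chi {n. fps_nth a n \<noteq> 0}"
    by (rule fps_ext) (use a01 in \<open>auto simp: chi_def\<close>)
  have S: "(\<Sum>i=0..n. fps_nth a i * fps_nth c (n - i)) = 1" for n
    using o[of n] by (simp add: fps_mult_nth)
  show "tiling {n. fps_nth a n \<noteq> 0} {n. fps_nth c n \<noteq> 0}"
    unfolding tiling_def
  proof (intro conjI allI impI)
    show "0 \<in> {n. fps_nth a n \<noteq> 0}" "0 \<in> {n. fps_nth c n \<noteq> 0}" using a0 c0 by auto
  next
    fix n
    have "(\<Sum>i=0..n. fps_nth a i * fps_nth c (n - i)) \<noteq> 0" using S by simp
    then obtain i where "i \<in> {0..n}" "fps_nth a i * fps_nth c (n - i) \<noteq> 0"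
      by (meson sum.not_neutral_contains_not_neutral)
    then have "fps_nth a i \<noteq> 0" "fps_nth c (n-i) \<noteq> 0" "n = i + (n - i)" by auto
    then show "\<exists>x\<in>{n. fps_nth a n \<noteq> 0}. \<exists>y\<in>{n. fps_nth c n \<noteq> 0}. n = x + y"
      by blast
  next
    fix x y x' y'
    assume h: "x \<in> {n. fps_nth a n \<noteq> 0}" "y \<in> {n. fps_nth c n \<noteq> 0}" "x' \<in> {n. fps_nth a n \<noteq> 0}" "y' \<in> {n. fps_nth c n \<noteq> 0}" "x + y = x' + y'"
    show "x = x'"
    proof (rule ccontr)
      assume ne: "x \<noteq> x'"
      define n where "n = x + y"
      have e1: "fps_nth a x = 1" "fps_nth a x' = 1" "fps_nth c y = 1" "fps_nth c y' = 1"
        using h(1-4) a01[of x] a01[of x'] c01[of y] c01[of y'] by auto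
      have e2: "n - x = y" "n - x' = y'" using h(5) unfolding n_def by auto
      have t1: "fps_nth a x * fps_nth c (n - x) = 1" using e1 e2 by simp
      have t2: "fps_nth a x' * fps_nth c (n - x') = 1" using e1 e2 by simp
      have "(\<Sum>i\<in>{x,x'}. fps_nth a i * fps_nth c (n - i)) \<le> (\<Sum>i=0..n. fps_nth a i * fps_nth c (n - i))"
        by (rule sum_mono2) (use h in \<open>auto simp: n_def intro!: mult_nonneg_nonneg N0_nonneg a c\<close>)
      then have "2 \<le> (1::int)" using t1 t2 ne S[of n] by simp
      then show False by simp
    qed
  qed
qed

definition fins :: "int fps \<Rightarrow> bool" where "fins f \<longleftrightarrow> (\<exists>N. \<forall>n>N. fps_nth f n = 0)"

lemma fins_mult: assumes "fins a" "fins b" shows "fins (a*b)"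
proof -
  obtain Na Nb where Na: "\<forall>n>Na. fps_nth a n = 0" and Nb: "\<forall>n>Nb. fps_nth b n = 0"
    using assms unfolding fins_def by blast
  have "fps_nth (a*b) n = 0" if "n > Na + Nb" for n
    unfolding fps_mult_nth
  proof (rule sum.neutral, rule ballI)
    fix i assume "i \<in> {0..n}"
    show "fps_nth a i * fps_nth b (n - i) = 0"
    proof (cases "i > Na")
      case True then show ?thesis using Na by simp
    next
      case False then have "n - i > Nb" using that by linarith
      then show ?thesis using Nb by simp
    qed
  qed
  then show ?thesis unfolding fins_def by blast
qed

lemma fins_prod_list: "\<forall>x\<in>set xs. fins x \<Longrightarrow> fins (prod_list xs)"
proof (induction xs)
  case Nil then show ?case unfolding fins_def by (auto intro: exI[of _ 0])
next
  case (Cons x xs) then show ?case by (simp add: fins_mult)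
qed

lemma prod_list_remove1': "x \<in> set xs \<Longrightarrow> prod_list xs = x * prod_list (remove1 x (xs :: int fps list))"
  by (induction xs) (auto simp: mult.left_commute)

lemma N0_prod_list: "\<forall>x\<in>set xs. x \<in> N0_fps \<Longrightarrow> prod_list xs \<in> N0_fps"
proof (induction xs)
  case Nil then show ?case by (simp add: N0_fps_def)
next
  case (Cons x xs) then show ?case using N0_mult by simp
qed

lemma fps_nth_one_ne: "n \<noteq> 0 \<Longrightarrow> fps_nth (1::int fps) n = 0" by simp

theorem mainTheorem5:
  shows "semidomain N0_fps \<and> \<not> sd_atomic N0_fps"
proof
  show "semidomain N0_fps" by (rule semidomain_N0)
  show "\<not> sd_atomic N0_fps"
  proof
    assume at: "sd_atomic N0_fps"
    have oS: "ones \<in> N0_fps - {0}"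
    proof -
      have "fps_nth ones 0 \<noteq> fps_nth 0 0" by (simp add: ones_def)
      then have "ones \<noteq> 0" by metis
      moreover have "ones \<in> N0_fps" by (simp add: ones_def N0_fps_def)
      ultimately show ?thesis by simp
    qed
    have onu: "\<not> sd_unit N0_fps ones"
    proof
      assume "sd_unit N0_fps ones"
      then have "ones = 1" by (rule unit_one)
      then have "fps_nth ones 1 = fps_nth (1::int fps) 1" by simp
      then show False by (simp add: ones_def)
    qed
    obtain as where as: "\<forall>a\<in>set as. sd_atom N0_fps a" "ones = prod_list as"
      using at oS onu unfolding sd_atomic_def by blast
    have "\<not> fins ones" unfolding fins_def ones_def by (auto intro: gt_ex)
    then have "\<not> (\<forall>x\<in>set as. fins x)" using fins_prod_list[of as] as(2) by metis
    then obtain a where aas: "a \<in> set as" and af: "\<not> fins a" by blast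
    have atom: "sd_atom N0_fps a" using as aas by blast
    have aS: "a \<in> N0_fps" using atom unfolding sd_atom_def by blast
    define c where "c = prod_list (remove1 a as)"
    have cS: "c \<in> N0_fps" unfolding c_def
    proof (rule N0_prod_list, rule ballI)
      fix x assume "x \<in> set (remove1 a as)"
      then have "x \<in> set as" by (meson in_mono set_remove1_subset)
      then show "x \<in> N0_fps" using as(1) unfolding sd_atom_def by blast
    qed
    have ac: "a * c = ones" unfolding c_def using prod_list_remove1'[OF aas] as by simp
    define A where "A = {n. fps_nth a n \<noteq> 0}"
    have aA: "a = chi A" and T: "tiling A {n. fps_nth c n \<noteq> 0}"
      using div_tiling[OF aS cS ac] unfolding A_def by auto
    have infA: "infinite A"
    proof
      assume "finite A"
      then obtain N where "\<forall>n\<in>A. n \<le> N" using finite_nat_set_iff_bounded_le by blast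
      then have "fins a" unfolding fins_def A_def by (metis leD mem_Collect_eq)
      then show False using af by simp
    qed
    obtain d k where B: "blockP d k A" using tiling_block[OF T infA] by blast
    define P where "P = {i. i < d*k \<and> d dvd i}"
    define Q where "Q = {n\<in>A. d*k dvd n}"
    have fac: "a = chi P * chi Q" using block_factor[OF B] aA unfolding P_def Q_def by simp
    have dk: "1 \<le> d" "2 \<le> k" using B unfolding blockP_def by auto
    have A0: "0 \<in> A" using T unfolding tiling_def by blast
    have P0: "0 \<in> P" and Q0: "0 \<in> Q" using dk A0 unfolding P_def Q_def by auto
    have chi0: "0 \<in> X \<Longrightarrow> chi X \<noteq> 0" for X
    proof
      assume "0 \<in> X" "chi X = 0"
      then have "fps_nth (chi X) 0 = fps_nth 0 0" by simp
      then show False using \<open>0 \<in> X\<close> by (simp add: chi_def)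
    qed
    have chi1: "x \<in> X \<Longrightarrow> x \<noteq> 0 \<Longrightarrow> chi X \<noteq> 1" for X x
    proof
      assume "x \<in> X" "x \<noteq> 0" "chi X = 1"
      then have "fps_nth (chi X) x = fps_nth 1 x" by simp
      then show False using \<open>x \<in> X\<close> \<open>x \<noteq> 0\<close> by (simp add: chi_def)
    qed
    have dP: "d \<in> P" unfolding P_def using dk by simp
    obtain n where nA: "n \<in> A" "n \<ge> d*k" using infA
      by (metis finite_nat_set_iff_bounded_le not_less_eq_eq nat_le_linear)
    have Bn: "\<And>n. n \<in> A \<longleftrightarrow> d dvd n \<and> d*k*(n div (d*k)) \<in> A" using B unfolding blockP_def by blast
    have "d*k*(n div (d*k)) \<in> A" using Bn[of n] nA(1) by blast
    then have qQ: "d*k*(n div (d*k)) \<in> Q" unfolding Q_def by simp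
    have qne: "d*k*(n div (d*k)) \<noteq> 0" using nA dk by (simp add: div_greater_zero_iff)
    have "sd_unit N0_fps (chi P) \<or> sd_unit N0_fps (chi Q)"
    proof -
      have "\<forall>b\<in>N0_fps - {0}. \<forall>c\<in>N0_fps - {0}. a = b * c \<longrightarrow> sd_unit N0_fps b \<or> sd_unit N0_fps c"
        using atom unfolding sd_atom_def by blast
      moreover have "chi P \<in> N0_fps - {0}" "chi Q \<in> N0_fps - {0}" using chi_N0 chi0[OF P0] chi0[OF Q0] by auto
      ultimately show ?thesis using fac by blast
    qed
    moreover have "d \<noteq> 0" using dk by simp
    then have "chi P \<noteq> 1" using chi1[OF dP] by simp
    moreover have "chi Q \<noteq> 1" using chi1[OF qQ qne] by simp
    ultimately show False using unit_one by metis
  qed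
qed

end
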